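(* Let $u,l\ge1$, $m=lu$, and let $1\le K\le N$ be integers with $K/N\ge2^{-u}+\frac1N$. Consider any erasure pattern in which the total number $e$ of erased modulation symbols satisfies $e\le (N-K+1)/(1-2^{-u})$. Then under the proportional multiplicity assignment (with any $M>0$) the ASD sufficient condition $S\ge\sqrt{2(K-1)C}$ holds; i.e., ASD under PMAS is guaranteed to decode up to $(N-K+1)/(1-2^{-u})$ erasure events.
   Context: Setting (RS coded modulation over an erasure channel): a Reed–Solomon code of length $N$ and dimension $K$ over $GF(2^m)$ with $m=lu$; each RS symbol is transmitted as $l$ modulation symbols ($2^u$-ary QAM or PSK), each carrying $u$ bits, and the channel erases modulation symbols ("erasure events"). An RS symbol in which $b_j\in\{0,\dots,l\}$ modulation symbols are erased is consistent with $2^{ub_j}$ candidate symbols. The proportional multiplicity assignment (PMAS) gives each such candidate multiplicity $M2^{-ub_j}$; the score is $S=\sum_j M2^{-ub_j}$ and the (approximate) cost is $C=\frac12\sum_j2^{ub_j}(M2^{-ub_j})^2$. *)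

theory Defs
  imports Complex_Main
begin

text \<open>RS symbols are indexed by j < N; b j is the number of erased modulation
symbols (out of l) in RS symbol j. Each of the 2^(u b_j) candidate symbols gets
PMAS multiplicity M 2^(-u b_j).\<close>

definition pmas_mult :: "nat \<Rightarrow> real \<Rightarrow> nat \<Rightarrow> real" where
  "pmas_mult u M bj = M * 2 powr (- (real u * real bj))"

definition pmas_score :: "nat \<Rightarrow> real \<Rightarrow> (nat \<Rightarrow> nat) \<Rightarrow> nat \<Rightarrow> real" where
  "pmas_score u M b N = (\<Sum>j<N. pmas_mult u M (b j))"

definition pmas_cost :: "nat \<Rightarrow> real \<Rightarrow> (nat \<Rightarrow> nat) \<Rightarrow> nat \<Rightarrow> real" where
  "pmas_cost u M b N =
     1/2 * (\<Sum>j<N. 2 powr (real u * real (b j)) * (pmas_mult u M (b j))^2)"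

end

theory Submission
  imports Defs
begin

lemma mult_eq: "pmas_mult u M bj = M * (2 powr (- real u)) ^ bj"
proof -
  have "(2::real) powr (- (real u * real bj)) = (2 powr (- real u)) powr (real bj)"
    by (simp add: powr_powr)
  also have "\<dots> = (2 powr (- real u)) ^ bj" by (simp add: powr_realpow)
  finally show ?thesis by (simp add: pmas_mult_def)
qed

lemma cost_term: "2 powr (real u * real bj) * (pmas_mult u M bj)^2 = M^2 * (2 powr (- real u)) ^ bj"
proof -
  have e: "(2::real) powr (real u * real bj) * 2 powr (- (real u * real bj)) = 1"
    by (simp add: powr_add[symmetric])
  have "2 powr (real u * real bj) * (pmas_mult u M bj)^2
      = M^2 * (2 powr (real u * real bj) * 2 powr (- (real u * real bj))) * 2 powr (- (real u * real bj))"
    by (simp add: pmas_mult_def power2_eq_square algebra_simps)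
  also have "\<dots> = M^2 * 2 powr (- (real u * real bj))" using e by simp
  also have "\<dots> = M^2 * (2 powr (- real u)) ^ bj" using mult_eq[of u M bj]
    by (simp add: pmas_mult_def)
  finally show ?thesis .
qed

lemma bern_aux:
  fixes q :: real assumes "0 \<le> q" "q \<le> 1"
  shows "1 - (1 - q) * real n \<le> q ^ n"
proof (induction n)
  case 0 then show ?case by simp
next
  case (Suc n)
  have "q * (1 - (1 - q) * real n) \<le> q * q ^ n"
    using Suc.IH assms by (intro mult_left_mono) auto
  moreover have "1 - (1 - q) * real (Suc n) \<le> q * (1 - (1 - q) * real n)"
  proof -
    have "q * (1 - q) * real n \<le> (1 - q) * real n" using assms
      by (simp add: mult_right_mono mult_left_le_one_le)
    then show ?thesis by (simp add: algebra_simps)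
  qed
  ultimately show ?case by simp
qed

theorem theorem3:
  fixes u l m N K :: nat and b :: "nat \<Rightarrow> nat" and M :: real
  assumes "u \<ge> 1" and "l \<ge> 1" and "m = l * u"
    and "1 \<le> K" and "K \<le> N"
    and "real K / real N \<ge> 2 powr (- real u) + 1 / real N"
    and "\<forall>j<N. b j \<le> l"
    and "real (\<Sum>j<N. b j) \<le> (real N - real K + 1) / (1 - 2 powr (- real u))"
    and "M > 0"
  shows "pmas_score u M b N \<ge> sqrt (2 * (real K - 1) * pmas_cost u M b N)"
proof -
  define q :: real where "q = 2 powr (- real u)"
  have q0: "q > 0" unfolding q_def by simp
  have q1: "q < 1" unfolding q_def using assms(1) powr_less_mono[of "- real u" 0 "2::real"] by simp
  define X where "X = (\<Sum>j<N. q ^ b j)"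
  have S: "pmas_score u M b N = M * X"
    by (simp add: pmas_score_def X_def q_def mult_eq sum_distrib_left)
  have C: "pmas_cost u M b N = M^2 * X / 2"
    by (simp add: pmas_cost_def X_def q_def cost_term sum_distrib_left sum_divide_distrib[symmetric])
  have bern: "1 - (1 - q) * real (b j) \<le> q ^ b j" for j
    using bern_aux[of q "b j"] q0 q1 by simp
  have "(1 - q) * real (\<Sum>j<N. b j) \<le> real N - real K + 1"
    using assms(8) q1 unfolding q_def[symmetric] by (simp add: field_simps)
  moreover have "(\<Sum>j<N. 1 - (1 - q) * real (b j)) \<le> X"
    unfolding X_def by (rule sum_mono) (rule bern)
  moreover have "(\<Sum>j<N. 1 - (1 - q) * real (b j)) = real N - (1 - q) * real (\<Sum>j<N. b j)"
    by (simp add: sum_subtractf sum_distrib_left)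
  ultimately have X: "X \<ge> real K - 1" by linarith
  have K1: "real K - 1 \<ge> 0" using assms(4) by simp
  have "2 * (real K - 1) * pmas_cost u M b N = (real K - 1) * X * M^2" by (simp add: C)
  also have "\<dots> \<le> X * X * M^2"
    using X K1 by (intro mult_right_mono mult_right_mono) auto
  also have "\<dots> = (M * X)^2" by (simp add: power2_eq_square)
  finally have "sqrt (2 * (real K - 1) * pmas_cost u M b N) \<le> sqrt ((M*X)^2)"
    by (rule real_sqrt_le_mono)
  also have "\<dots> = M * X" using X K1 assms(9) by simp
  finally show ?thesis using S by simp
qed

end
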